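(* Let $B$ be a metric space, $\mu$ a measure on $B$, let $c,v>0$ satisfy $c=\frac{v-n}{n(v+1)}$, and let $f:B\to\mathbb R^n$ be a map such that the following condition fails: "for every $d>c$ there exists $T>0$ such that for all $t\ge T$ and all $\Gamma\in\mathfrak P_{n+1}$, $\|g_tu_{f(\cdot)}\Gamma\|_{\mu,B}\ge e^{-\mathrm{rk}(\Gamma)dt}$." Then there exists $u>v$ such that $f(B\cap\operatorname{supp}\mu)\subset\mathcal W_u$.
   Context: For a row vector $y\in\mathbb R^n$, $u_y=\begin{pmatrix}1&y\\0&I_n\end{pmatrix}$ and $g_t=\mathrm{diag}(e^t,e^{-t/n},\dots,e^{-t/n})$, acting on column vectors of $\mathbb R^{n+1}$. $\mathfrak P_{n+1}$ is the set of nonzero primitive subgroups of $\mathbb Z^{n+1}$; $\mathrm{rk}$ is rank; $\|\Gamma\|$ is the Euclidean covolume of $\Gamma$ in its real span. $\|g\|_{\mu,B}=\sup_{B\cap\operatorname{supp}\mu}|g|$. For $u>0$, $\mathcal W_u$ is the set of $y\in\mathbb R^n$ for which there are infinitely many $q\in\mathbb Z^n$ with $|\sum y_iq_i+p|<\|q\|^{-u}$ for some $p\in\mathbb Z$. *)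

theory Defs
  imports "HOL-Analysis.Analysis"
begin

text \<open>The dimension n is CARD('n) for a finite type 'n; row vectors y in R^n
are elements of real^'n. Column vectors of R^(n+1) are elements of real^('n option), where
the coordinate None is the first coordinate (the one scaled by e^t) and Some j are the
remaining n coordinates.\<close>

definition real_vec :: "int^'m \<Rightarrow> real^'m" where
  "real_vec z = (\<chi> i. real_of_int (z $ i))"

text \<open>The matrix u_y = [[1, y],[0, I_n]].\<close>
definition u_mat :: "real^'n \<Rightarrow> real^('n::finite option)^('n option)" where
  "u_mat y = (\<chi> i j. if i = j then 1
                      else if i = None then (case j of Some k \<Rightarrow> y $ k | None \<Rightarrow> 0)
                      else 0)"

definition g_mat :: "real \<Rightarrow> real^('n::finite option)^('n option)" where
  "g_mat t = (\<chi> i j. if i = j then (if i = None then exp t else exp (- t / real CARD('n)))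
                      else 0)"

definition primitive_subgroup :: "(int^'m::finite) set \<Rightarrow> bool" where
  "primitive_subgroup \<Gamma> \<longleftrightarrow>
     0 \<in> \<Gamma> \<and> (\<forall>a\<in>\<Gamma>. \<forall>b\<in>\<Gamma>. a - b \<in> \<Gamma>) \<and> \<Gamma> \<noteq> {0} \<and>
     \<Gamma> = {z. real_vec z \<in> span (real_vec ` \<Gamma>)}"

definition rk :: "(int^'m::finite) set \<Rightarrow> nat" where
  "rk \<Gamma> = dim (real_vec ` \<Gamma>)"

definition is_Zbasis :: "(int^'m::finite) set \<Rightarrow> (int^'m) list \<Rightarrow> bool" where
  "is_Zbasis \<Gamma> bs \<longleftrightarrow> distinct bs \<and> independent (real_vec ` set bs) \<and>
     \<Gamma> = {z. \<exists>c::nat \<Rightarrow> int. z = (\<Sum>i<length bs. c i *s (bs ! i))}"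

definition det_fun :: "nat \<Rightarrow> (nat \<Rightarrow> nat \<Rightarrow> real) \<Rightarrow> real" where
  "det_fun k M = (\<Sum>p | p permutes {..<k}. of_int (sign p) * (\<Prod>i<k. M i (p i)))"

text \<open>Euclidean covolume of the lattice g Gamma in its real span: square root of the
Gram determinant of the image of a Z-basis of Gamma.\<close>
definition covol :: "real^'m^'m \<Rightarrow> (int^'m::finite) set \<Rightarrow> real" where
  "covol g \<Gamma> = (let bs = (SOME bs. is_Zbasis \<Gamma> bs) in
      sqrt (det_fun (length bs)
              (\<lambda>i j. (g *v real_vec (bs ! i)) \<bullet> (g *v real_vec (bs ! j)))))"

definition msupp :: "'a::topological_space measure \<Rightarrow> 'a set" where
  "msupp \<mu> = {x. \<forall>U. open U \<and> x \<in> U \<longrightarrow> emeasure \<mu> U > 0}"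

definition W_set :: "real \<Rightarrow> (real^'n::finite) set" where
  "W_set u = {y. infinite {q :: int^'n. \<exists>p::int.
        \<bar>y \<bullet> real_vec q + real_of_int p\<bar> < norm (real_vec q) powr (- u)}}"

end

theory Submission
  imports Defs
begin

lemma borel_lebesgue: "A \<in> sets borel \<Longrightarrow> A \<in> sets lebesgue"
  by (simp add: sets_completionI_sets)

lemma blichfeldt:
  fixes S :: "(real^'k::finite) set"
  assumes bS: "bounded S" and mS: "S \<in> sets lebesgue" and gt: "measure lebesgue S > 1"
  shows "\<exists>x\<in>S. \<exists>y\<in>S. x \<noteq> y \<and> (\<forall>j. (x - y)$j \<in> \<int>)"
proof (rule ccontr)
  assume H0: "\<not> ?thesis"
  have H: "x = y" if "x \<in> S" "y \<in> S" "\<forall>j. (x - y)$j \<in> \<int>" for x y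
    using H0 that by blast
  define fl :: "real^'k \<Rightarrow> real^'k" where "fl x = (\<chi> j. of_int \<lfloor>x$j\<rfloor>)" for x
  obtain B where B: "\<And>x. x \<in> S \<Longrightarrow> norm x \<le> B"
    using bS bounded_iff by blast
  define N where "N = \<lceil>B\<rceil> + 1"
  have flS: "fl ` S \<subseteq> (\<lambda>f. \<chi> j. of_int (f j)) ` (PiE UNIV (\<lambda>_. {-N..N}))"
  proof
    fix v assume "v \<in> fl ` S"
    then obtain x where x: "x \<in> S" "v = fl x" by auto
    have "\<bar>x$j\<bar> \<le> B" for j using B[OF x(1)] component_le_norm_cart[of x j] by linarith
    hence "\<lfloor>x$j\<rfloor> \<in> {-N..N}" for j
    proof -
      have a: "\<bar>x$j\<bar> \<le> B" by fact
      have "of_int \<lfloor>x$j\<rfloor> \<le> x$j" "x$j < of_int \<lfloor>x$j\<rfloor> + 1" "B \<le> of_int \<lceil>B\<rceil>"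
        by (simp, linarith, simp)
      hence "real_of_int \<lfloor>x$j\<rfloor> \<le> of_int N" "- real_of_int N \<le> of_int \<lfloor>x$j\<rfloor>"
        using a unfolding N_def abs_le_iff by linarith+
      thus ?thesis by simp
    qed
    thus "v \<in> (\<lambda>f. \<chi> j. of_int (f j)) ` (PiE UNIV (\<lambda>_. {-N..N}))"
      using x by (intro image_eqI[of _ _ "\<lambda>j. \<lfloor>x$j\<rfloor>"]) (auto simp: fl_def)
  qed
  have finZ: "finite (fl ` S)"
    by (rule finite_subset[OF flS]) (intro finite_imageI finite_PiE, auto)
  define Sz where "Sz z = S \<inter> {x. fl x = z}" for z
  define Tz where "Tz z = (\<lambda>x. x - z) ` Sz z" for z
  have cellset: "{x. fl x = z} = {x. \<forall>j. z$j \<le> x$j} \<inter> {x. \<forall>j. x$j < z$j + 1}" if zS: "z \<in> fl ` S" for z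
  proof -
    obtain x0 where z: "z = fl x0" using zS by auto
    show ?thesis unfolding z fl_def
      by (auto simp: vec_eq_iff floor_eq_iff)
  qed
  have cl1: "closed {x::real^'k. \<forall>j. z$j \<le> x$j}" for z
    by (intro closed_Collect_all closed_Collect_le continuous_intros)
  have op1: "open {x::real^'k. \<forall>j. x$j < z$j + 1}" for z
  proof -
    have "{x::real^'k. \<forall>j. x$j < z$j + 1} = (\<Inter>j. {x. x$j < z$j + 1})" by auto
    also have "open \<dots>" by (rule open_INT) (auto intro: open_halfspace_component_lt_cart)
    finally show ?thesis .
  qed
  have meas: "Sz z \<in> lmeasurable" if "z \<in> fl ` S" for z
  proof -
    have "Sz z = S \<inter> ({x. \<forall>j. z$j \<le> x$j} \<inter> {x. \<forall>j. x$j < z$j + 1})"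
      using cellset[OF that] by (simp add: Sz_def)
    moreover have "{x::real^'k. \<forall>j. z$j \<le> x$j} \<inter> {x. \<forall>j. x$j < z$j + 1} \<in> sets lebesgue"
      using cl1 op1 by (intro sets.Int borel_lebesgue borel_closed borel_open) auto
    ultimately have "Sz z \<in> sets lebesgue" using mS by auto
    moreover have "bounded (Sz z)" using bS by (rule bounded_subset) (auto simp: Sz_def)
    ultimately show ?thesis by (intro bounded_set_imp_lmeasurable)
  qed
  have measT: "Tz z \<in> lmeasurable" if "z \<in> fl ` S" for z
    unfolding Tz_def using meas[OF that] by (simp add: measurable_translation_subtract)
  have mTz: "measure lebesgue (Tz z) = measure lebesgue (Sz z)" for z
    unfolding Tz_def by (rule measure_translation_subtract)
  have SU: "S = (\<Union>z\<in>fl ` S. Sz z)" by (auto simp: Sz_def)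
  have "measure lebesgue S \<le> (\<Sum>z\<in>fl ` S. measure lebesgue (Sz z))"
    by (subst SU, rule measure_UNION_le) (use finZ meas in auto)
  also have "\<dots> = (\<Sum>z\<in>fl ` S. measure lebesgue (Tz z))" by (simp add: mTz)
  also have "\<dots> = measure lebesgue (\<Union>z\<in>fl ` S. Tz z)"
  proof (rule measure_UNION'[symmetric])
    show "finite (fl ` S)" by fact
    show "\<And>i. i \<in> fl ` S \<Longrightarrow> Tz i \<in> fmeasurable lebesgue" using measT by auto
    show "pairwise (\<lambda>i j. disjnt (Tz i) (Tz j)) (fl ` S)"
    proof (clarsimp simp: pairwise_def disjnt_def)
      fix a b assume ab: "a \<in> S" "b \<in> S" "fl a \<noteq> fl b"
      show "Tz (fl a) \<inter> Tz (fl b) = {}"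
      proof (rule ccontr)
        assume "Tz (fl a) \<inter> Tz (fl b) \<noteq> {}"
        then obtain x x' where xx: "x \<in> Sz (fl a)" "x' \<in> Sz (fl b)" "x - fl a = x' - fl b"
          unfolding Tz_def by auto
        have "\<forall>j. (x - x')$j \<in> \<int>"
        proof
          fix j
          have "(x - x') = fl a - fl b" using xx(3) by (simp add: algebra_simps)
          thus "(x - x')$j \<in> \<int>" by (simp add: fl_def)
        qed
        hence "x = x'" using H xx by (auto simp: Sz_def)
        with xx have "fl a = fl b" by (auto simp: Sz_def)
        with ab show False by simp
      qed
    qed
  qed
  also have "\<dots> \<le> measure lebesgue (cbox (0::real^'k) 1)"
  proof (rule measure_mono_fmeasurable)
    show "(\<Union>z\<in>fl ` S. Tz z) \<in> sets lebesgue" using measT finZ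
      by (intro sets.finite_UN) (auto simp: fmeasurable_def)
    show "cbox (0::real^'k) 1 \<in> fmeasurable lebesgue" by simp
    show "(\<Union>z\<in>fl ` S. Tz z) \<subseteq> cbox 0 1"
    proof clarify
      fix z x assume "z \<in> S" "x \<in> Tz (fl z)"
      then obtain x0 where "x0 \<in> S" "fl x0 = fl z" "x = x0 - fl z" by (auto simp: Tz_def Sz_def)
      thus "x \<in> cbox 0 1"
        by (auto simp: mem_box_cart fl_def) (metis of_int_floor_le, smt (verit) real_of_int_floor_add_one_gt)
    qed
  qed
  also have "\<dots> = 1"
  proof -
    have "(0::real^'k) \<in> cbox 0 1" by (simp add: mem_box_cart)
    hence "cbox (0::real^'k) 1 \<noteq> {}" by blast
    thus ?thesis by (simp add: content_cbox_cart)
  qed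
  finally show False using gt by simp
qed


lemma prod_Basis_cart: "(\<Prod>i\<in>(Basis::(real^('k::finite)) set). f i) = (\<Prod>j\<in>UNIV. f (axis j 1))"
proof -
  have e: "(Basis::(real^('k::finite)) set) = range (\<lambda>j. axis j 1)" by (auto simp: Basis_vec_def)
  have i: "inj (\<lambda>j::'k. axis j (1::real))" by (auto simp: inj_on_def axis_eq_axis)
  have "(\<Prod>i\<in>(Basis::(real^('k::finite)) set). f i) = prod f (range (\<lambda>j. axis j 1))"
    by (subst e) (rule refl)
  also have "\<dots> = prod (f \<circ> (\<lambda>j. axis j 1)) UNIV" by (rule prod.reindex[OF i])
  finally show ?thesis by simp
qed
lemma measure_box_cart:
  fixes a b :: "real^('k::finite)"
  assumes "\<And>j. a$j \<le> b$j"
  shows "measure lebesgue (box a b) = (\<Prod>j\<in>UNIV. b$j - a$j)"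
proof -
  have "measure lebesgue (box a b) = measure lborel (box a b)" by simp
  also have "\<dots> = (\<Prod>i\<in>Basis. (b - a) \<bullet> i)"
    by (rule measure_lborel_box) (auto simp: Basis_vec_def inner_axis assms)
  also have "\<dots> = (\<Prod>j\<in>UNIV. b$j - a$j)" by (simp add: prod_Basis_cart inner_axis)
  finally show ?thesis .
qed

lemma minkowski_lf:
  fixes A :: "(real^('k::{finite,wellorder}))^('k::_)"
  assumes dA: "det A \<noteq> 0" and r: "r > 0" and rA: "r ^ CARD('k) > \<bar>det A\<bar>"
  shows "\<exists>c. c \<noteq> 0 \<and> (\<forall>j. c$j \<in> \<int>) \<and> (\<forall>j. \<bar>(A *v c)$j\<bar> < r)"
proof -
  obtain B where AB: "A ** B = mat 1" "B ** A = mat 1"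
    using dA invertible_det_nz invertible_def by blast
  have "det A * det B = 1" using AB(1) by (metis det_I det_mul)
  hence dB: "det B = 1 / det A" using dA by (simp add: field_simps)
  define f where "f = (\<lambda>y. B *v y)"
  have lf: "linear f" unfolding f_def by (simp add: matrix_vector_mul_linear)
  have mf: "matrix f = B" unfolding f_def by (simp add: matrix_of_matrix_vector_mul)
  define a :: "real^('k::_)" where "a = (\<chi> j. - (r/2))"
  define b :: "real^('k::_)" where "b = (\<chi> j. r/2)"
  define Bx where "Bx = box a b"
  have Bxm: "Bx \<in> lmeasurable" unfolding Bx_def by simp
  have mBx: "measure lebesgue Bx = r ^ CARD('k)"
    unfolding Bx_def using r by (subst measure_box_cart) (auto simp: a_def b_def)
  define S where "S = f ` Bx"
  have Sm: "S \<in> lmeasurable" unfolding S_def using lf Bxm by (rule measurable_linear_image)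
  have mS: "measure lebesgue S = r ^ CARD('k) / \<bar>det A\<bar>"
    unfolding S_def using measure_linear_image[OF lf Bxm] mf mBx dB by simp
  have gt: "measure lebesgue S > 1"
  proof -
    have "0 < \<bar>det A\<bar>" using dA by simp
    thus ?thesis unfolding mS using rA by (simp add: less_divide_eq)
  qed
  have bS: "bounded S" unfolding S_def Bx_def
    using lf by (intro bounded_linear_image bounded_box) (simp add: linear_conv_bounded_linear)
  obtain x y where xy: "x \<in> S" "y \<in> S" "x \<noteq> y" "\<forall>j. (x - y)$j \<in> \<int>"
    using blichfeldt[OF bS _ gt] Sm by (auto simp: fmeasurable_def)
  obtain x' y' where x'y': "x' \<in> Bx" "y' \<in> Bx" "x = B *v x'" "y = B *v y'"
    using xy(1,2) unfolding S_def f_def by auto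
  have Ax: "A *v x = x'" "A *v y = y'" using x'y' AB(1)
    by (simp_all add: matrix_vector_mul_assoc)
  show ?thesis
  proof (intro exI conjI)
    show "x - y \<noteq> 0" using xy by simp
    show "\<forall>j. (x - y)$j \<in> \<int>" by fact
    show "\<forall>j. \<bar>(A *v (x - y))$j\<bar> < r"
    proof
      fix j
      have "- (r/2) < x'$j \<and> x'$j < r/2" "- (r/2) < y'$j \<and> y'$j < r/2" using x'y'(1,2)
        by (simp_all add: Bx_def mem_box_cart a_def b_def)
      hence "\<bar>x'$j\<bar> < r/2" "\<bar>y'$j\<bar> < r/2" unfolding abs_less_iff by linarith+
      thus "\<bar>(A *v (x - y))$j\<bar> < r" using Ax by (simp add: matrix_vector_mult_diff_distrib)
    qed
  qed
qed


lemma det_fun_Suc_last: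
  assumes z: "\<And>l. l < m \<Longrightarrow> H m l = 0"
  shows "det_fun (Suc m) H = H m m * det_fun m H"
proof -
  have ins: "{..<Suc m} = insert m {..<m}" by auto
  define f where "f = (\<lambda>p. of_int (sign p) * (\<Prod>i<Suc m. H i (p i)))"
  have "det_fun (Suc m) H = sum f {p. p permutes insert m {..<m}}"
    by (simp add: det_fun_def ins f_def)
  also have "\<dots> = sum (\<lambda>b. sum (\<lambda>q. f (Transposition.transpose m b \<circ> q)) {p. p permutes {..<m}}) (insert m {..<m})"
    by (rule sum_over_permutations_insert) auto
  also have "\<dots> = sum (\<lambda>q. f (Transposition.transpose m m \<circ> q)) {p. p permutes {..<m}}"
  proof -
    have "sum (\<lambda>q. f (Transposition.transpose m b \<circ> q)) {p. p permutes {..<m}} = 0" if b: "b < m" for b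
    proof (rule sum.neutral, clarify)
      fix q assume q: "q permutes {..<m}"
      have "q m = m" using q by (simp add: permutes_not_in)
      hence "H m ((Transposition.transpose m b \<circ> q) m) = 0" using z[OF b] by simp
      hence "(\<Prod>i<Suc m. H i ((Transposition.transpose m b \<circ> q) i)) = 0"
        by (intro prod_zero) auto
      thus "f (Transposition.transpose m b \<circ> q) = 0" by (simp add: f_def)
    qed
    thus ?thesis by (simp add: sum.insert)
  qed
  also have "\<dots> = sum (\<lambda>q. H m m * (of_int (sign q) * (\<Prod>i<m. H i (q i)))) {p. p permutes {..<m}}"
  proof (rule sum.cong[OF refl], clarify)
    fix q assume q: "q permutes {..<m}"
    have "q m = m" using q by (simp add: permutes_not_in)
    thus "f (Transposition.transpose m m \<circ> q) = H m m * (of_int (sign q) * (\<Prod>i<m. H i (q i)))"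
      by (simp add: f_def)
  qed
  also have "\<dots> = H m m * det_fun m H" by (simp add: det_fun_def sum_distrib_left)
  finally show ?thesis .
qed

lemma det_fun_block:
  assumes z: "\<And>i l. k \<le> i \<Longrightarrow> i < k + j \<Longrightarrow> l < i \<Longrightarrow> H i l = 0"
  shows "det_fun (k + j) H = det_fun k H * (\<Prod>i\<in>{k..<k+j}. H i i)"
  using z
proof (induction j)
  case 0 then show ?case by simp
next
  case (Suc j)
  have "det_fun (k + Suc j) H = H (k+j) (k+j) * det_fun (k + j) H"
    using det_fun_Suc_last[of "k+j" H] Suc.prems by simp
  also have "\<dots> = det_fun k H * (\<Prod>i\<in>{k..<k + Suc j}. H i i)"
    using Suc by (simp add: prod.atLeastLessThan_Suc)
  finally show ?case .
qed

lemma det_reindex: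
  fixes B :: "real^('k::finite)^'k"
  assumes e: "bij_betw e {..<CARD('k)} (UNIV::'k set)"
  shows "det B = det_fun CARD('k) (\<lambda>i j. B $ e i $ e j)"
proof -
  define K where "K = CARD('k)"
  have e: "bij_betw e {..<K} (UNIV::'k set)" using e by (simp add: K_def)
  define e' where "e' = inv_into {..<K} e"
  have e'e: "\<And>n. n < K \<Longrightarrow> e' (e n) = n" using e by (simp add: e'_def bij_betw_inv_into_left)
  have ee': "\<And>x. e (e' x) = x" using e by (simp add: e'_def bij_betw_inv_into_right)
  have e'b: "bij_betw e' UNIV {..<K}" using e by (simp add: e'_def bij_betw_inv_into)
  have e'K: "\<And>x. e' x < K" using e'b by (auto simp: bij_betw_def)
  define J where "J q = (\<lambda>x. e (q (e' x)))" for q :: "nat \<Rightarrow> nat"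
  define I where "I p = (\<lambda>n. if n < K then e' (p (e n)) else n)" for p :: "'k \<Rightarrow> 'k"
  have JJ: "J q = (\<lambda>x. if x \<in> UNIV then e (q (e' x)) else x)" for q by (simp add: J_def)
  have II: "I p = (\<lambda>x. if x \<in> {..<K} then e' (p (e x)) else x)" for p by (simp add: I_def)
  have "det_fun K (\<lambda>i j. B $ e i $ e j) = det B"
    unfolding det_def det_fun_def
  proof (rule sum.reindex_bij_witness[of _ I J])
    fix q assume "q \<in> {q. q permutes {..<K}}"
    hence q: "q permutes {..<K}" by simp
    show "I (J q) = q"
    proof
      fix n show "I (J q) n = q n"
      proof (cases "n < K")
        case True
        hence "q n < K" using q permutes_in_image by fastforce
        thus ?thesis using True by (simp add: I_def J_def e'e)
      next
        case False thus ?thesis using q by (simp add: I_def permutes_not_in)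
      qed
    qed
    interpret pb: permutes_bij_finite q "{..<K}" UNIV e e' "\<lambda>x. if x \<in> UNIV then e (q (e' x)) else x"
      by unfold_locales (use q e e'e in auto)
    show "J q \<in> {p. p permutes UNIV}" using pb.permutes_p' by (simp add: JJ)
    have sg: "sign (J q) = sign q" using pb.sign_p' by (simp add: JJ)
    have "(\<Prod>a\<in>UNIV. B $ a $ J q a) = (\<Prod>n\<in>{..<K}. B $ e n $ J q (e n))"
      by (rule prod.reindex_bij_betw[symmetric]) (rule e)
    also have "\<dots> = (\<Prod>n<K. B $ e n $ e (q n))"
      by (intro prod.cong refl) (simp add: J_def e'e)
    finally show "of_int (sign (J q)) * (\<Prod>i\<in>UNIV. B $ i $ J q i) =
        of_int (sign q) * (\<Prod>i<K. B $ e i $ e (q i))" using sg by simp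
  next
    fix p assume "p \<in> {p. p permutes (UNIV::'k set)}"
    hence p: "p permutes (UNIV::'k set)" by simp
    show "J (I p) = p" by (rule ext) (simp add: I_def J_def e'K ee')
    interpret pb: permutes_bij_finite p UNIV "{..<K}" e' e "\<lambda>x. if x \<in> {..<K} then e' (p (e x)) else x"
      by unfold_locales (use p e'b ee' in auto)
    show "I p \<in> {q. q permutes {..<K}}" using pb.permutes_p' by (simp add: II)
  qed
  thus ?thesis by (simp add: K_def)
qed


lemma sum_split_add: "(\<Sum>n<k+d. f n) = (\<Sum>n<k. f n) + (\<Sum>j<d. f (k+(j::nat)))"
  by (induction d) (simp_all add: add.assoc)

lemma indep_coeff_zero:
  fixes v :: "nat \<Rightarrow> 'a::real_vector"
  assumes ind: "independent (v ` {..<N})" and inj: "inj_on v {..<N}"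
    and s: "(\<Sum>i<N. c i *\<^sub>R v i) = 0" and i: "i < N"
  shows "c i = 0"
proof (rule ccontr)
  assume ci: "c i \<noteq> 0"
  define u where "u x = c (inv_into {..<N} v x)" for x
  have "(\<Sum>x\<in>v ` {..<N}. u x *\<^sub>R x) = (\<Sum>n<N. u (v n) *\<^sub>R v n)"
    by (rule sum.reindex[OF inj, unfolded o_def])
  also have "\<dots> = (\<Sum>n<N. c n *\<^sub>R v n)"
    by (intro sum.cong refl) (simp add: u_def inv_into_f_f[OF inj])
  finally have "(\<Sum>x\<in>v ` {..<N}. u x *\<^sub>R x) = 0" using s by simp
  moreover have "u (v i) \<noteq> 0" using ci i by (simp add: u_def inv_into_f_f[OF inj])
  ultimately have "dependent (v ` {..<N})"
    using i by (subst dependent_finite) auto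
  thus False using ind by simp
qed

lemma coeffs_indep:
  fixes v :: "nat \<Rightarrow> 'a::real_vector"
  assumes H: "\<And>c. (\<Sum>i<N. c i *\<^sub>R v i) = 0 \<Longrightarrow> \<forall>i<N. c i = 0"
  shows "inj_on v {..<N}" "independent (v ` {..<N})"
proof -
  show inj: "inj_on v {..<N}"
  proof (rule inj_onI, rule ccontr)
    fix i j assume ij: "i \<in> {..<N}" "j \<in> {..<N}" "v i = v j" "i \<noteq> j"
    define c where "c n = (if n = i then 1 else if n = j then -1 else (0::real))" for n
    have "(\<Sum>n<N. c n *\<^sub>R v n) = (\<Sum>n\<in>{i,j}. c n *\<^sub>R v n)"
      by (rule sum.mono_neutral_right) (use ij in \<open>auto simp: c_def\<close>)
    also have "\<dots> = 0" using ij by (simp add: c_def)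
    finally have "\<forall>n<N. c n = 0" by (rule H)
    thus False using ij by (auto simp: c_def)
  qed
  show "independent (v ` {..<N})"
  proof
    assume "dependent (v ` {..<N})"
    then obtain u where u: "\<exists>x\<in>v ` {..<N}. u x \<noteq> 0" "(\<Sum>x\<in>v ` {..<N}. u x *\<^sub>R x) = 0"
      by (subst (asm) dependent_finite) auto
    have "(\<Sum>n<N. u (v n) *\<^sub>R v n) = 0"
      using u(2) by (subst (asm) sum.reindex[OF inj]) (simp add: o_def)
    hence "\<forall>n<N. u (v n) = 0" by (rule H)
    thus False using u(1) by auto
  qed
qed

lemma det_fun_cong:
  assumes "\<And>i j. i < k \<Longrightarrow> j < k \<Longrightarrow> M i j = M' i j"
  shows "det_fun k M = det_fun k M'"
  unfolding det_fun_def
proof (rule sum.cong[OF refl])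
  fix p assume "p \<in> {p. p permutes {..<k}}"
  hence p: "p permutes {..<k}" by simp
  have "(\<Prod>i<k. M i (p i)) = (\<Prod>i<k. M' i (p i))"
  proof (rule prod.cong[OF refl])
    fix i assume i: "i \<in> {..<k}"
    hence "p i < k" using p permutes_in_image by fastforce
    thus "M i (p i) = M' i (p i)" using assms i by simp
  qed
  thus "of_int (sign p) * (\<Prod>i<k. M i (p i)) = of_int (sign p) * (\<Prod>i<k. M' i (p i))" by simp
qed


lemma short_vector:
  fixes w :: "nat \<Rightarrow> real^('k::{finite,wellorder})"
  assumes k: "k \<le> CARD('k)"
    and ind: "\<And>c. (\<Sum>i<k. c i *\<^sub>R w i) = 0 \<Longrightarrow> \<forall>i<k. c i = 0"
    and R: "R > 0" "R ^ k > real CARD('k) ^ CARD('k) * sqrt (det_fun k (\<lambda>i j. w i \<bullet> w j))"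
  shows "\<exists>c::nat\<Rightarrow>int. (\<exists>i<k. c i \<noteq> 0) \<and> norm (\<Sum>i<k. of_int (c i) *\<^sub>R w i) < R"
proof -
  define K where "K = CARD('k)"
  have K0: "K > 0" by (simp add: K_def)
  define D where "D = det_fun k (\<lambda>i j. w i \<bullet> w j)"
  have injw: "inj_on w {..<k}" and indw: "independent (w ` {..<k})"
    using coeffs_indep[of w k] ind by auto
  define W where "W = span (w ` {..<k})"
  have dimW: "dim W = k" unfolding W_def dim_span
    using dim_eq_card_independent[OF indw] card_image[OF injw] by simp
  define U where "U = {y. \<forall>x\<in>W. orthogonal x y}"
  have subU: "subspace U" unfolding U_def by (rule subspace_orthogonal_to_vectors)
  have dimU: "dim U = K - k"
  proof -
    have "dim {y \<in> UNIV. \<forall>x\<in>W. orthogonal x y} + dim W = dim (UNIV :: (real^('k::_)) set)"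
      by (rule dim_subspace_orthogonal_to_vectors) (auto simp: W_def subspace_span subspace_UNIV)
    thus ?thesis using dimW by (simp add: U_def K_def dim_UNIV)
  qed
  obtain Bu where Bu: "Bu \<subseteq> U" "pairwise orthogonal Bu" "\<And>x. x \<in> Bu \<Longrightarrow> norm x = 1"
      "independent Bu" "card Bu = dim U" "span Bu = U"
    using orthonormal_basis_subspace[OF subU] by blast
  have finBu: "finite Bu" using Bu(4) by (rule independent_imp_finite)
  obtain u where u0: "bij_betw u {0..<K-k} Bu" using ex_bij_betw_nat_finite[OF finBu] Bu(5) dimU by auto
  hence u: "bij_betw u {..<K-k} Bu" by (simp add: atLeast0LessThan)
  have uB: "\<And>j. j < K-k \<Longrightarrow> u j \<in> Bu" using u by (auto simp: bij_betw_def)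
  have uU: "\<And>j. j < K-k \<Longrightarrow> u j \<in> U" using uB Bu(1) by auto
  have un: "\<And>j. j < K-k \<Longrightarrow> u j \<bullet> u j = 1" using uB Bu(3) by (metis norm_eq_1)
  have injU: "inj_on u {..<K-k}" using u by (auto simp: bij_betw_def)
  have uorth: "\<And>i j. i < K-k \<Longrightarrow> j < K-k \<Longrightarrow> i \<noteq> j \<Longrightarrow> u i \<bullet> u j = 0"
  proof -
    fix i j assume ij: "i < K-k" "j < K-k" "i \<noteq> j"
    hence "u i \<noteq> u j" using injU by (auto simp: inj_on_def)
    thus "u i \<bullet> u j = 0" using Bu(2) uB ij by (auto simp: pairwise_def orthogonal_def)
  qed
  have indu: "independent (u ` {..<K-k})" using u Bu(4) by (simp add: bij_betw_def)
  have WU: "\<And>x y. x \<in> W \<Longrightarrow> y \<in> U \<Longrightarrow> x \<bullet> y = 0" by (auto simp: U_def orthogonal_def)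
  obtain e where e: "bij_betw e {..<K} (UNIV::'k set)"
    using ex_bij_betw_nat_finite[of "UNIV::'k set"] by (auto simp: K_def atLeast0LessThan)
  define e' where "e' = inv_into {..<K} e"
  have e'e: "\<And>n. n < K \<Longrightarrow> e' (e n) = n" using e by (simp add: e'_def bij_betw_inv_into_left)
  have ee': "\<And>x. e (e' x) = x" using e by (simp add: e'_def bij_betw_inv_into_right)
  have e'b: "bij_betw e' UNIV {..<K}" using e by (simp add: e'_def bij_betw_inv_into)
  have e'K: "\<And>x. e' x < K" using e'b by (auto simp: bij_betw_def)
  define col where "col i = (if i < k then w i else R *\<^sub>R u (i - k))" for i
  define A :: "real^('k::_)^('k::_)" where "A = (\<chi> a b. col (e' b) $ a)"
  have Av: "A *v x = (\<Sum>n<K. x$(e n) *\<^sub>R col n)" for x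
  proof -
    have "A *v x = (\<Sum>b\<in>UNIV. x$b *\<^sub>R col (e' b))"
      by (simp add: A_def matrix_vector_mult_def vec_eq_iff sum_component mult.commute)
    also have "\<dots> = (\<Sum>n\<in>{..<K}. x$(e n) *\<^sub>R col (e' (e n)))"
      by (rule sum.reindex_bij_betw[OF e, symmetric])
    also have "\<dots> = (\<Sum>n<K. x$(e n) *\<^sub>R col n)" using e'e by simp
    finally show ?thesis .
  qed
  define aa where "aa x = (\<Sum>n<k. x$(e n) *\<^sub>R w n)" for x :: "real^('k::_)"
  define bb where "bb x = (\<Sum>j<K-k. x$(e (k+j)) *\<^sub>R u j)" for x :: "real^('k::_)"
  have Kk: "K = k + (K - k)" using k by (simp add: K_def)
  have Av2: "A *v x = aa x + R *\<^sub>R bb x" for x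
  proof -
    have "A *v x = (\<Sum>n<k + (K-k). x$(e n) *\<^sub>R col n)" using Kk Av by metis
    also have "\<dots> = aa x + R *\<^sub>R bb x"
      by (simp add: sum_split_add aa_def bb_def col_def scaleR_sum_right mult.commute)
    finally show ?thesis .
  qed
  have aaW: "aa x \<in> W" for x unfolding aa_def W_def
    by (intro span_sum span_mul span_base) auto
  have bbU: "bb x \<in> U" for x
  proof -
    have "bb x \<in> span Bu" unfolding bb_def by (intro span_sum span_mul span_base uB) auto
    thus ?thesis using Bu(6) by simp
  qed
  have bbu: "bb x \<bullet> u j = x$(e (k+j))" if j: "j < K-k" for x j
  proof -
    have "bb x \<bullet> u j = (\<Sum>i<K-k. x$(e (k+i)) * (u i \<bullet> u j))"
      by (simp add: bb_def inner_sum_left)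
    also have "\<dots> = (\<Sum>i\<in>{j}. x$(e (k+i)) * (u i \<bullet> u j))"
      by (rule sum.mono_neutral_right) (use j uorth in auto)
    also have "\<dots> = x$(e (k+j))" using un[OF j] by simp
    finally show ?thesis .
  qed
  define H where "H i j = col i \<bullet> col j" for i j
  have AtA: "(transpose A ** A) $ a $ b = col (e' a) \<bullet> col (e' b)" for a b
    by (simp add: A_def transpose_def matrix_matrix_mult_def inner_vec_def mult.commute)
  have "det (transpose A ** A) = det_fun CARD('k) (\<lambda>i j. (transpose A ** A) $ e i $ e j)"
    by (rule det_reindex) (use e in \<open>simp add: K_def\<close>)
  also have "\<dots> = det_fun K H"
    by (simp add: K_def) (rule det_fun_cong, simp add: AtA H_def e'e K_def)
  also have "\<dots> = det_fun k H * (\<Prod>i\<in>{k..<k+(K-k)}. H i i)"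
    using Kk det_fun_block[of k "K-k" H]
  proof -
    have "det_fun (k + (K-k)) H = det_fun k H * (\<Prod>i\<in>{k..<k+(K-k)}. H i i)"
    proof (rule det_fun_block)
      fix i l assume il: "k \<le> i" "i < k + (K - k)" "l < i"
      show "H i l = 0"
      proof (cases "l < k")
        case True
        have "w l \<in> W" unfolding W_def using True by (intro span_base) auto
        hence "w l \<bullet> u (i - k) = 0" using WU uU il by auto
        thus ?thesis using True il by (simp add: H_def col_def inner_commute)
      next
        case False
        thus ?thesis using il uorth[of "i-k" "l-k"] by (simp add: H_def col_def)
      qed
    qed
    thus ?thesis using Kk by metis
  qed
  also have "\<dots> = D * (R^2) ^ (K - k)"
  proof -
    have "det_fun k H = D" unfolding D_def by (rule det_fun_cong) (simp add: H_def col_def)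
    moreover have "(\<Prod>i\<in>{k..<k+(K-k)}. H i i) = (\<Prod>i\<in>{k..<k+(K-k)}. R^2)"
      by (intro prod.cong refl) (auto simp: H_def col_def un power2_eq_square)
    ultimately show ?thesis by simp
  qed
  finally have detA2: "det A ^ 2 = D * (R^2) ^ (K - k)"
    by (simp add: det_mul det_transpose power2_eq_square)
  have injA: "x = 0" if Ax: "A *v x = 0" for x
  proof -
    have "aa x = - (R *\<^sub>R bb x)" using Ax Av2[of x] by (simp add: eq_neg_iff_add_eq_0)
    hence "aa x \<in> U" using subU bbU by (metis subspace_mul subspace_neg)
    hence "aa x \<bullet> aa x = 0" using WU aaW by blast
    hence a0: "aa x = 0" by simp
    hence xa: "\<forall>n<k. x$(e n) = 0" using ind[of "\<lambda>n. x$(e n)"] by (simp add: aa_def)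
    have "R *\<^sub>R bb x = 0" using Ax Av2[of x] a0 by simp
    hence "bb x = 0" using R by simp
    hence xb: "x$(e (k+j)) = 0" if "j < K-k" for j
      using indep_coeff_zero[OF indu injU, of "\<lambda>j. x$(e (k+j))" j] that by (simp add: bb_def)
    show "x = 0"
    proof (rule vec_eq_iff[THEN iffD2], rule allI)
      fix a
      have n: "e' a < K" "e (e' a) = a" using e'K ee' by auto
      show "x$a = 0$a"
      proof (cases "e' a < k")
        case True thus ?thesis using xa n by force
      next
        case False
        hence "e' a = k + (e' a - k)" "e' a - k < K - k" using n by auto
        thus ?thesis using xb[of "e' a - k"] n by (metis zero_index)
      qed
    qed
  qed
  have dA: "det A \<noteq> 0"
  proof -
    have "inj ((*v) A)"
    proof (rule injI)
      fix x y assume "A *v x = A *v y"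
      hence "A *v (x - y) = 0" by (simp add: matrix_vector_mult_diff_distrib)
      hence "x - y = 0" by (rule injA)
      thus "x = y" by simp
    qed
    thus ?thesis using det_nz_iff_inj[OF matrix_vector_mul_linear[of A]]
      by (simp add: matrix_of_matrix_vector_mul)
  qed
  have RK: "(R^2) ^ (K - k) > 0" using R by simp
  have D0: "D > 0"
  proof -
    have "det A ^ 2 > 0" using dA by simp
    thus ?thesis using detA2 RK by (simp add: zero_less_mult_iff)
  qed
  have absdet: "\<bar>det A\<bar> = sqrt D * R ^ (K - k)"
  proof -
    have "\<bar>det A\<bar> = sqrt (det A ^ 2)" by simp
    also have "\<dots> = sqrt D * sqrt ((R ^ (K-k))^2)"
      by (simp add: detA2 real_sqrt_mult power_mult_distrib[symmetric] power_mult[symmetric] mult.commute)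
    also have "\<dots> = sqrt D * R ^ (K-k)" using R by simp
    finally show ?thesis .
  qed
  define r where "r = R / real K"
  have r0: "r > 0" using R K0 by (simp add: r_def)
  have rK: "r ^ K > \<bar>det A\<bar>"
  proof -
    have "real K ^ K * sqrt D * R ^ (K-k) < R ^ k * R ^ (K-k)"
      using R(2) by (simp add: D_def K_def R(1))
    also have "\<dots> = R ^ K" using Kk by (metis power_add)
    finally have "real K ^ K * \<bar>det A\<bar> < R ^ K" by (simp add: absdet mult.assoc)
    hence "\<bar>det A\<bar> < R ^ K / real K ^ K" using K0 by (simp add: field_simps)
    thus ?thesis by (simp add: r_def power_divide)
  qed
  obtain c where c: "c \<noteq> 0" "\<forall>j. c$j \<in> \<int>" "\<forall>j. \<bar>(A *v c)$j\<bar> < r"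
    using minkowski_lf[OF dA r0] rK by (auto simp: K_def)
  have nAc: "norm (A *v c) < R"
  proof -
    have "norm (A *v c) \<le> (\<Sum>j\<in>UNIV. \<bar>(A *v c)$j\<bar>)" by (rule norm_le_l1_cart)
    also have "\<dots> < (\<Sum>j\<in>(UNIV::'k set). r)" using c(3) by (intro sum_strict_mono) auto
    also have "\<dots> = R" using K0 by (simp add: r_def K_def)
    finally show ?thesis .
  qed
  have cb: "c$(e (k+j)) = 0" if j: "j < K - k" for j
  proof (rule ccontr)
    assume nz: "c$(e (k+j)) \<noteq> 0"
    have "1 \<le> \<bar>c$(e (k+j))\<bar>" using nz c(2) by (intro Ints_nonzero_abs_ge1) auto
    also have "\<dots> = \<bar>bb c \<bullet> u j\<bar>" using bbu[OF j] by simp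
    also have "\<dots> \<le> norm (bb c) * norm (u j)" by (rule Cauchy_Schwarz_ineq2)
    also have "\<dots> = norm (bb c)" using un[OF j] by (simp add: norm_eq_1)
    finally have nb: "1 \<le> norm (bb c)" .
    have "orthogonal (aa c) (R *\<^sub>R bb c)"
      using WU aaW bbU subU by (simp add: orthogonal_def subspace_mul)
    hence "(norm (A *v c))^2 = (norm (aa c))^2 + (norm (R *\<^sub>R bb c))^2"
      unfolding Av2[of c] by (rule norm_add_Pythagorean)
    also have "\<dots> \<ge> (norm (R *\<^sub>R bb c))^2" by simp
    finally have "(norm (A *v c))^2 \<ge> (R * norm (bb c))^2" using R by simp
    moreover have "R * norm (bb c) \<ge> R" using nb R by simp
    moreover have "(norm (A *v c))^2 < R^2" using nAc by (simp add: power_strict_mono)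
    ultimately show False using R
      by (smt (verit) power_mono norm_ge_zero)
  qed
  have b0: "bb c = 0" unfolding bb_def using cb by simp
  have Aca: "A *v c = aa c" using Av2[of c] b0 by simp
  obtain a0 where a0: "c$a0 \<noteq> 0" using c(1) by (metis vec_eq_iff zero_index)
  have na: "e' a0 < k"
  proof (rule ccontr)
    assume "\<not> e' a0 < k"
    hence "e' a0 = k + (e' a0 - k)" "e' a0 - k < K - k" using e'K[of a0] by auto
    thus False using cb[of "e' a0 - k"] a0 ee'[of a0] by metis
  qed
  define ci where "ci n = \<lfloor>c$(e n)\<rfloor>" for n
  have cie: "of_int (ci n) = c$(e n)" for n using c(2) by (simp add: ci_def of_int_floor)
  show ?thesis
  proof (rule exI[of _ ci], intro conjI)
    show "\<exists>i<k. ci i \<noteq> 0"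
      using na cie[of "e' a0"] a0 ee'[of a0] by (intro exI[of _ "e' a0"]) auto
    have "(\<Sum>i<k. of_int (ci i) *\<^sub>R w i) = aa c" by (simp add: aa_def cie)
    thus "norm (\<Sum>i<k. of_int (ci i) *\<^sub>R w i) < R" using nAc Aca by simp
  qed
qed


definition sgrp :: "(int^'m::finite) set \<Rightarrow> bool" where
  "sgrp G \<longleftrightarrow> 0 \<in> G \<and> (\<forall>a\<in>G. \<forall>b\<in>G. a - b \<in> G)"

lemma sgrp_neg: "sgrp G \<Longrightarrow> a \<in> G \<Longrightarrow> - a \<in> G"
  unfolding sgrp_def by (metis diff_0)

lemma sgrp_add: "sgrp G \<Longrightarrow> a \<in> G \<Longrightarrow> b \<in> G \<Longrightarrow> a + b \<in> G"
  using sgrp_neg[of G b] unfolding sgrp_def by (metis diff_minus_eq_add)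

lemma sgrp_smult_nat: "sgrp G \<Longrightarrow> a \<in> G \<Longrightarrow> (int n) *s a \<in> G"
proof (induction n)
  case 0 thus ?case by (simp add: sgrp_def vector_smult_lzero)
next
  case (Suc n)
  have "int (Suc n) *s a = a + int n *s a" by (simp add: vector_sadd_rdistrib)
  thus ?case using Suc sgrp_add by metis
qed

lemma sgrp_smult: "sgrp G \<Longrightarrow> a \<in> G \<Longrightarrow> (q::int) *s a \<in> G"
proof (cases "q \<ge> 0")
  case True
  assume "sgrp G" "a \<in> G"
  thus ?thesis using sgrp_smult_nat[of G a "nat q"] True by simp
next
  case False
  assume G: "sgrp G" "a \<in> G"
  have "(- q) *s a \<in> G" using sgrp_smult_nat[of G a "nat (-q)"] False G by simp
  hence "- ((- q) *s a) \<in> G" using sgrp_neg G by blast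
  thus ?thesis by (simp add: vector_sneg_minus1 vector_smult_assoc)
qed

lemma sgrp_sum: "sgrp G \<Longrightarrow> (\<And>i. i < (n::nat) \<Longrightarrow> b i \<in> G) \<Longrightarrow> (\<Sum>i<n. (c i::int) *s b i) \<in> G"
proof (induction n)
  case 0 thus ?case by (simp add: sgrp_def)
next
  case (Suc n)
  thus ?case using sgrp_add[of G] sgrp_smult[of G] by simp
qed

lemma Zbasis_subset: "is_Zbasis G bs \<Longrightarrow> set bs \<subseteq> G"
proof
  fix x assume G: "is_Zbasis G bs" and x: "x \<in> set bs"
  then obtain i where i: "i < length bs" "x = bs ! i" by (metis in_set_conv_nth)
  define c :: "nat \<Rightarrow> int" where "c j = (if j = i then 1 else 0)" for j
  have "(\<Sum>j<length bs. c j *s bs ! j) = (\<Sum>j<length bs. if j = i then bs ! j else 0)"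
    by (intro sum.cong refl) (simp add: c_def)
  also have "\<dots> = bs ! i" using i(1) by (simp add: sum.delta)
  finally have "x = (\<Sum>j<length bs. c j *s bs ! j)" using i by simp
  hence "x \<in> {z. \<exists>c::nat \<Rightarrow> int. z = (\<Sum>i<length bs. c i *s (bs ! i))}" by blast
  thus "x \<in> G" using G unfolding is_Zbasis_def by blast
qed

lemma real_vec_add: "real_vec (a + b) = real_vec a + real_vec b"
  by (simp add: real_vec_def vec_eq_iff)
lemma real_vec_diff: "real_vec (a - b) = real_vec a - real_vec b"
  by (simp add: real_vec_def vec_eq_iff)
lemma real_vec_zero: "real_vec 0 = 0"
  by (simp add: real_vec_def vec_eq_iff)
lemma real_vec_smult: "real_vec (c *s a) = of_int c *\<^sub>R real_vec a"
  by (simp add: real_vec_def vec_eq_iff)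
lemma real_vec_sum: "real_vec (\<Sum>i\<in>A. f i) = (\<Sum>i\<in>A. real_vec (f i))"
  by (induction A rule: infinite_finite_induct) (simp_all add: real_vec_zero real_vec_add)
lemma real_vec_inj: "inj real_vec"
  by (rule injI) (simp add: real_vec_def vec_eq_iff)
lemma real_vec_eq0: "real_vec a = 0 \<longleftrightarrow> a = 0"
  by (metis real_vec_inj real_vec_zero injD)


lemma sgrp_Zbasis_aux:
  assumes "finite S"
  shows "\<forall>G::(int^'m::finite) set. sgrp G \<and> (\<forall>z\<in>G. \<forall>i. i \<notin> S \<longrightarrow> z$i = 0) \<longrightarrow> (\<exists>bs. is_Zbasis G bs)"
  using assms
proof (induction S rule: finite_induct)
  case empty
  show ?case
  proof (intro allI impI)
    fix G :: "(int^'m) set" assume G: "sgrp G \<and> (\<forall>z\<in>G. \<forall>i. i \<notin> {} \<longrightarrow> z$i = 0)"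
    hence "G = {0}" by (auto simp: sgrp_def vec_eq_iff)
    thus "\<exists>bs. is_Zbasis G bs" by (intro exI[of _ "[]"]) (auto simp: is_Zbasis_def independent_empty)
  qed
next
  case (insert a S)
  show ?case
  proof (intro allI impI)
    fix G :: "(int^'m) set" assume G: "sgrp G \<and> (\<forall>z\<in>G. \<forall>i. i \<notin> insert a S \<longrightarrow> z$i = 0)"
    hence sG: "sgrp G" and supp: "\<And>z i. z \<in> G \<Longrightarrow> i \<notin> insert a S \<Longrightarrow> z$i = 0" by auto
    have sub: "\<And>x y. x \<in> G \<Longrightarrow> y \<in> G \<Longrightarrow> x - y \<in> G" using sG by (simp add: sgrp_def)
    have G0: "0 \<in> G" using sG by (simp add: sgrp_def)
    define G' where "G' = {z\<in>G. z$a = 0}"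
    have sG': "sgrp G'" unfolding sgrp_def G'_def
    proof (intro conjI ballI)
      show "0 \<in> {z \<in> G. z $ a = 0}" using G0 by simp
      fix x y assume "x \<in> {z \<in> G. z $ a = 0}" "y \<in> {z \<in> G. z $ a = 0}"
      thus "x - y \<in> {z \<in> G. z $ a = 0}" using sub by simp
    qed
    have supp': "\<forall>z\<in>G'. \<forall>i. i \<notin> S \<longrightarrow> z$i = 0"
      using supp by (auto simp: G'_def) (metis insert_iff)
    obtain bs' where bs': "is_Zbasis G' bs'" using insert.IH sG' supp' by blast
    have bs'G': "set bs' \<subseteq> G'" by (rule Zbasis_subset[OF bs'])
    show "\<exists>bs. is_Zbasis G bs"
    proof (cases "\<forall>z\<in>G. z$a = 0")
      case True
      hence "G = G'" by (auto simp: G'_def)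
      thus ?thesis using bs' by blast
    next
      case False
      then obtain z0 where z0: "z0 \<in> G" "z0$a \<noteq> 0" by blast
      define P where "P n = (n > 0 \<and> (\<exists>z\<in>G. z$a = int n))" for n :: nat
      have exP: "\<exists>n. P n"
      proof (cases "z0$a > 0")
        case True thus ?thesis using z0 by (intro exI[of _ "nat (z0$a)"]) (auto simp: P_def)
      next
        case False
        hence "(- z0)$a > 0" using z0 by simp
        moreover have "- z0 \<in> G" using sgrp_neg[OF sG z0(1)] .
        ultimately show ?thesis by (intro exI[of _ "nat ((- z0)$a)"]) (auto simp: P_def intro!: bexI[of _ "- z0"])
      qed
      define \<delta> where "\<delta> = (LEAST n. P n)"
      have P\<delta>: "P \<delta>" unfolding \<delta>_def using exP by (rule LeastI_ex)
      then obtain h where h: "h \<in> G" "h$a = int \<delta>" "\<delta> > 0" by (auto simp: P_def)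
      have dvd: "\<exists>q. z$a = q * int \<delta>" if z: "z \<in> G" for z
      proof -
        define q where "q = z$a div int \<delta>"
        define r where "r = z$a mod int \<delta>"
        have zr: "z$a = q * int \<delta> + r" by (simp add: q_def r_def)
        have r0: "0 \<le> r" "r < int \<delta>" using h(3) by (simp_all add: r_def)
        have "z - q *s h \<in> G" using sub[OF z sgrp_smult[OF sG h(1)]] .
        moreover have "(z - q *s h)$a = r" using zr h(2) by simp
        ultimately have "r = 0"
        proof -
          assume A: "z - q *s h \<in> G" "(z - q *s h)$a = r"
          show "r = 0"
          proof (rule ccontr)
            assume "r \<noteq> 0"
            hence "nat r > 0" "(z - q *s h)$a = int (nat r)" using A r0 by auto
            hence "P (nat r)" using A(1) unfolding P_def by blast
            hence "\<delta> \<le> nat r" unfolding \<delta>_def by (rule Least_le)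
            thus False using r0 by linarith
          qed
        qed
        thus ?thesis using zr by auto
      qed
      have hnot: "h \<notin> set bs'" using bs'G' h by (auto simp: G'_def)
      have spanS: "span (real_vec ` set bs') \<subseteq> {x. x$a = 0}"
      proof (rule span_minimal)
        show "real_vec ` set bs' \<subseteq> {x. x$a = 0}" using bs'G' by (auto simp: G'_def real_vec_def)
        show "subspace {x::real^'m. x$a = 0}" by (auto simp: subspace_def)
      qed
      have hspan: "real_vec h \<notin> span (real_vec ` set bs')"
        using spanS h by (auto simp: real_vec_def)
      have ind: "independent (real_vec ` set (h # bs'))"
        using bs' hspan span_base[of "real_vec h" "real_vec ` set bs'"]
        by (auto simp: is_Zbasis_def independent_insert)
      have comb: "(\<Sum>i<length (h # bs'). c i *s ((h # bs') ! i)) =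
          c 0 *s h + (\<Sum>i<length bs'. c (Suc i) *s (bs' ! i))" for c :: "nat \<Rightarrow> int"
        unfolding length_Cons sum.lessThan_Suc_shift by simp
      have "G = {z. \<exists>c::nat \<Rightarrow> int. z = (\<Sum>i<length (h # bs'). c i *s ((h # bs') ! i))}"
      proof (intro set_eqI iffI)
        fix z assume z: "z \<in> G"
        obtain q where q: "z$a = q * int \<delta>" using dvd[OF z] by blast
        have "z - q *s h \<in> G" using sub[OF z sgrp_smult[OF sG h(1)]] .
        moreover have "(z - q *s h)$a = 0" using q h(2) by simp
        ultimately have "z - q *s h \<in> G'" by (simp add: G'_def)
        then obtain c' where c': "z - q *s h = (\<Sum>i<length bs'. c' i *s (bs' ! i))"
          using bs' unfolding is_Zbasis_def by blast
        define c where "c i = (if i = 0 then q else c' (i - 1))" for i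
        have "z = (\<Sum>i<length (h # bs'). c i *s ((h # bs') ! i))"
          unfolding comb using c' by (simp add: c_def algebra_simps)
        thus "z \<in> {z. \<exists>c::nat \<Rightarrow> int. z = (\<Sum>i<length (h # bs'). c i *s ((h # bs') ! i))}" by blast
      next
        fix z assume "z \<in> {z. \<exists>c::nat \<Rightarrow> int. z = (\<Sum>i<length (h # bs'). c i *s ((h # bs') ! i))}"
        then obtain c where c: "z = (\<Sum>i<length (h # bs'). c i *s ((h # bs') ! i))" by blast
        have "(h # bs') ! i \<in> G" if i: "i < length (h # bs')" for i
        proof (cases i)
          case 0 thus ?thesis using h(1) by simp
        next
          case (Suc j)
          hence "bs' ! j \<in> set bs'" using i by simp
          hence "bs' ! j \<in> G'" using bs'G' by blast
          thus ?thesis using Suc by (simp add: G'_def)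
        qed
        thus "z \<in> G" unfolding c by (rule sgrp_sum[OF sG])
      qed
      moreover have "distinct (h # bs')" using hnot bs' by (simp add: is_Zbasis_def)
      ultimately have "is_Zbasis G (h # bs')" using ind by (simp add: is_Zbasis_def)
      thus ?thesis by blast
    qed
  qed
qed

lemma primitive_Zbasis:
  assumes "primitive_subgroup (G :: (int^'m::finite) set)"
  shows "\<exists>bs. is_Zbasis G bs"
proof -
  have "sgrp G" using assms unfolding primitive_subgroup_def sgrp_def by (elim conjE) (rule conjI)
  thus ?thesis using sgrp_Zbasis_aux[of "UNIV::'m set"] by simp
qed


lemma Zbasis_D:
  assumes "is_Zbasis G bs"
  shows "distinct bs" "independent (real_vec ` set bs)"
    "G = {z. \<exists>c::nat \<Rightarrow> int. z = (\<Sum>i<length bs. c i *s (bs ! i))}"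
  using assms unfolding is_Zbasis_def by blast+

lemma real_vec_inj_on: "inj_on real_vec A"
  by (rule inj_on_subset[OF real_vec_inj subset_UNIV])

lemma Zbasis_card:
  assumes bs: "is_Zbasis G bs"
  shows "card (real_vec ` set bs) = length bs"
proof -
  have "card (real_vec ` set bs) = card (set bs)" by (rule card_image[OF real_vec_inj_on])
  also have "\<dots> = length bs"
  proof -
    have "distinct bs" using bs unfolding is_Zbasis_def by blast
    thus ?thesis by (rule distinct_card)
  qed
  finally show ?thesis .
qed

lemma rk_Zbasis:
  assumes bs: "is_Zbasis G bs"
  shows "rk G = length bs"
proof -
  have sub: "set bs \<subseteq> G" by (rule Zbasis_subset[OF bs])
  have "real_vec ` G \<subseteq> span (real_vec ` set bs)"
  proof
    fix x assume "x \<in> real_vec ` G"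
    then obtain z where z: "z \<in> G" "x = real_vec z" by blast
    then obtain c where c: "z = (\<Sum>i<length bs. c i *s (bs ! i))"
      using bs unfolding is_Zbasis_def by blast
    have "x = (\<Sum>i<length bs. of_int (c i) *\<^sub>R real_vec (bs ! i))"
      using z c by (simp add: real_vec_sum real_vec_smult)
    also have "\<dots> \<in> span (real_vec ` set bs)"
      by (intro span_sum span_mul span_base) auto
    finally show "x \<in> span (real_vec ` set bs)" .
  qed
  moreover have "real_vec ` set bs \<subseteq> span (real_vec ` G)"
    by (rule subset_trans[OF image_mono[OF sub] span_superset])
  ultimately have sp: "span (real_vec ` G) = span (real_vec ` set bs)" by (rule span_eq[THEN iffD2, OF conjI])
  have "dim (real_vec ` G) = dim (span (real_vec ` G))" by (rule dim_span[symmetric])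
  also have "\<dots> = dim (span (real_vec ` set bs))" by (simp only: sp)
  also have "\<dots> = dim (real_vec ` set bs)" by (rule dim_span)
  also have "\<dots> = card (real_vec ` set bs)"
  proof -
    have "independent (real_vec ` set bs)" using bs unfolding is_Zbasis_def by blast
    thus ?thesis by (rule dim_eq_card_independent)
  qed
  also have "\<dots> = length bs" by (rule Zbasis_card[OF bs])
  finally show ?thesis unfolding rk_def .
qed

lemma Zbasis_coeffs:
  assumes bs: "is_Zbasis G bs"
  shows "\<And>c. (\<Sum>i<length bs. c i *\<^sub>R real_vec (bs ! i)) = 0 \<Longrightarrow> \<forall>i<length bs. c i = 0"
proof -
  fix c :: "nat \<Rightarrow> real" assume s: "(\<Sum>i<length bs. c i *\<^sub>R real_vec (bs ! i)) = 0"
  have img: "(\<lambda>i. real_vec (bs ! i)) ` {..<length bs} = real_vec ` set bs"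
    by (auto simp: set_conv_nth image_iff)
  have ind: "independent ((\<lambda>i. real_vec (bs ! i)) ` {..<length bs})"
    using Zbasis_D(2)[OF bs] img by simp
  have inj: "inj_on (\<lambda>i. real_vec (bs ! i)) {..<length bs}"
  proof (rule inj_onI)
    fix i j assume "i \<in> {..<length bs}" "j \<in> {..<length bs}" "real_vec (bs ! i) = real_vec (bs ! j)"
    hence "bs ! i = bs ! j" using injD[OF real_vec_inj] by blast
    thus "i = j" using \<open>i \<in> {..<length bs}\<close> \<open>j \<in> {..<length bs}\<close>
      using Zbasis_D(1)[OF bs] by (simp add: nth_eq_iff_index_eq)
  qed
  show "\<forall>i<length bs. c i = 0" using indep_coeff_zero[OF ind inj s] by blast
qed

lemma covol_short:
  fixes G :: "(int^('m::finite)) set" and M :: "real^'m^'m"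
  assumes prim: "primitive_subgroup G" and injM: "\<And>x. M *v x = 0 \<Longrightarrow> x = 0"
    and B: "covol M G < B" "B > 0"
  shows "\<exists>z\<in>G. z \<noteq> 0 \<and> norm (M *v real_vec z) <
     (2 * real (2 * CARD('m)) ^ (2 * CARD('m)) * B) powr (1 / real (rk G))"
proof -
  define bs where "bs = (SOME bs. is_Zbasis G bs)"
  have bs: "is_Zbasis G bs" unfolding bs_def using primitive_Zbasis[OF prim] by (rule someI_ex)
  define k where "k = length bs"
  have rk: "rk G = k" using rk_Zbasis[OF bs] by (simp add: k_def)
  have Gdef: "G = {z. \<exists>c::nat \<Rightarrow> int. z = (\<Sum>i<k. c i *s (bs ! i))}"
    using Zbasis_D(3)[OF bs] by (simp add: k_def)
  have k1: "k \<ge> 1"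
  proof (rule ccontr)
    assume "\<not> k \<ge> 1"
    hence "k = 0" by simp
    hence "G = {0}" using Gdef by simp
    thus False using prim by (simp add: primitive_subgroup_def)
  qed
  have kle: "k \<le> CARD('m)"
  proof -
    have "independent (real_vec ` set bs)" using Zbasis_D(2)[OF bs] .
    hence "card (real_vec ` set bs) \<le> DIM(real^'m)" using independent_bound by blast
    moreover have "card (real_vec ` set bs) = k" using Zbasis_card[OF bs] by (simp add: k_def)
    ultimately show ?thesis by simp
  qed
  obtain j :: "'m \<Rightarrow> 'm bit0" where j: "inj j"
    using card_le_inj[of "UNIV::'m set" "UNIV::'m bit0 set"] by auto
  define E :: "real^'m^('m bit0)" where "E = (\<chi> b a. if j a = b then 1 else 0)"
  have Ecomp: "(E *v x) $ b = (if b \<in> range j then x $ (inv j b) else 0)" for x b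
  proof (cases "b \<in> range j")
    case True
    then obtain a where a: "b = j a" by blast
    have "(E *v x) $ b = (\<Sum>a'\<in>UNIV. (if j a' = b then 1 else 0) * x $ a')"
      by (simp add: E_def matrix_vector_mult_def)
    also have "\<dots> = (\<Sum>a'\<in>UNIV. if a' = a then x $ a' else 0)"
      by (intro sum.cong refl) (simp add: a inj_eq[OF j])
    also have "\<dots> = x $ a" by simp
    finally show ?thesis using a by (simp add: inv_f_f[OF j])
  next
    case False
    hence "\<And>a. j a \<noteq> b" by auto
    thus ?thesis using False by (simp add: E_def matrix_vector_mult_def)
  qed
  have Einner: "(E *v x) \<bullet> (E *v y) = x \<bullet> y" for x y
  proof -
    have "(E *v x) \<bullet> (E *v y) = (\<Sum>b\<in>UNIV. if b \<in> range j then x $ (inv j b) * y $ (inv j b) else 0)"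
      by (simp add: inner_vec_def Ecomp if_distrib cong: if_cong)
    also have "\<dots> = (\<Sum>b\<in>range j. x $ (inv j b) * y $ (inv j b))"
      by (simp add: sum.If_cases Int_absorb1)
    also have "\<dots> = (\<Sum>a\<in>UNIV. x $ a * y $ a)"
      by (subst sum.reindex[OF j]) (simp add: inv_f_f[OF j])
    also have "\<dots> = x \<bullet> y" by (simp add: inner_vec_def)
    finally show ?thesis .
  qed
  have Enorm: "norm (E *v x) = norm x" for x
    by (simp add: norm_eq_sqrt_inner Einner)
  define w where "w i = E *v (M *v real_vec (bs ! i))" for i
  have lin: "(\<Sum>i<k. c i *\<^sub>R w i) = E *v (M *v (\<Sum>i<k. c i *\<^sub>R real_vec (bs ! i)))" for c
    by (simp add: w_def vec.sum matrix_vector_mult_scaleR)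
  have Einj: "E *v x = 0 \<Longrightarrow> x = 0" for x
    using Enorm[of x] by (metis norm_eq_zero)
  have ind: "\<forall>i<k. c i = 0" if "(\<Sum>i<k. c i *\<^sub>R w i) = 0" for c
  proof -
    have "(\<Sum>i<length bs. c i *\<^sub>R real_vec (bs ! i)) = 0"
      using that lin[of c] Einj injM by (simp add: k_def)
    thus ?thesis using Zbasis_coeffs[OF bs] by (simp add: k_def)
  qed
  define K where "K = CARD('m bit0)"
  have K: "K = 2 * CARD('m)" by (simp add: K_def)
  define X where "X = 2 * real K ^ K * B"
  have X0: "X > 0" using B by (simp add: X_def K_def)
  define R where "R = X powr (1 / real k)"
  have R0: "R > 0" using X0 by (simp add: R_def)
  have Rk: "R ^ k = X"
  proof -
    have "R ^ k = R powr real k" using R0 by (simp add: powr_realpow)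
    also have "\<dots> = X" using k1 X0 by (simp add: R_def powr_powr)
    finally show ?thesis .
  qed
  have gram: "det_fun k (\<lambda>i j. w i \<bullet> w j) =
      det_fun (length bs) (\<lambda>i j. (M *v real_vec (bs ! i)) \<bullet> (M *v real_vec (bs ! j)))"
    by (simp add: w_def Einner k_def)
  have cov: "sqrt (det_fun k (\<lambda>i j. w i \<bullet> w j)) = covol M G"
    unfolding gram covol_def Let_def bs_def ..
  have RX: "R ^ k > real CARD('m bit0) ^ CARD('m bit0) * sqrt (det_fun k (\<lambda>i j. w i \<bullet> w j))"
  proof -
    have KK: "real K ^ K > 0" by (simp add: K_def)
    have "real K ^ K * covol M G < real K ^ K * B" using B KK by simp
    also have "\<dots> < X" using B KK by (simp add: X_def)
    finally show ?thesis using Rk cov by (simp add: K_def)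
  qed
  have kK: "k \<le> CARD('m bit0)" using kle by simp
  obtain c :: "nat \<Rightarrow> int" where c: "\<exists>i<k. c i \<noteq> 0" "norm (\<Sum>i<k. of_int (c i) *\<^sub>R w i) < R"
    using short_vector[OF kK ind R0 RX] by blast
  define z where "z = (\<Sum>i<k. c i *s (bs ! i))"
  have zG: "z \<in> G" using Gdef z_def by blast
  have rz: "real_vec z = (\<Sum>i<k. of_int (c i) *\<^sub>R real_vec (bs ! i))"
    by (simp add: z_def real_vec_sum real_vec_smult)
  have z0: "z \<noteq> 0"
  proof
    assume "z = 0"
    hence "(\<Sum>i<length bs. of_int (c i) *\<^sub>R real_vec (bs ! i)) = 0"
      using rz by (simp add: real_vec_zero k_def)
    hence "\<forall>i<length bs. (of_int (c i)::real) = 0" by (rule Zbasis_coeffs[OF bs])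
    thus False using c(1) unfolding k_def by auto
  qed
  have "norm (M *v real_vec z) = norm (\<Sum>i<k. of_int (c i) *\<^sub>R w i)"
    using lin[of "\<lambda>i. of_int (c i)"] Enorm rz by simp
  also have "\<dots> < R" by (rule c(2))
  finally have nz: "norm (M *v real_vec z) < R" .
  have "R = (2 * real (2 * CARD('m)) ^ (2 * CARD('m)) * B) powr (1 / real (rk G))"
    by (simp add: R_def X_def K_def rk)
  thus ?thesis using zG z0 nz by blast
qed


lemma sum_delta_mult: "(\<Sum>j\<in>UNIV. (if i = j then a else 0) * (v::real^'m::finite) $ j) = a * v $ i"
proof -
  have "(\<Sum>j\<in>UNIV. (if i = j then a else 0) * v $ j) = (\<Sum>j\<in>UNIV. if j = i then a * v $ j else 0)"
    by (intro sum.cong refl) auto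
  also have "\<dots> = a * v $ i" by simp
  finally show ?thesis .
qed

lemma g_coord: "(g_mat t *v v) $ i = (if i = None then exp t else exp (- t / real CARD('n))) * v $ i"
  for v :: "real^('n::finite option)"
  unfolding matrix_vector_mult_def g_mat_def by (simp add: sum_delta_mult)

lemma u_coord_None: "(u_mat y *v x) $ None = x $ None + (\<Sum>k\<in>UNIV. y $ k * x $ (Some k))"
  for x :: "real^('n::finite option)"
proof -
  have "(u_mat y *v x) $ None = (\<Sum>j\<in>UNIV. (if None = j then 1 else (case j of Some k \<Rightarrow> y $ k | None \<Rightarrow> 0)) * x $ j)"
    unfolding matrix_vector_mult_def u_mat_def vec_lambda_beta by (intro sum.cong refl) simp
  also have "\<dots> = (\<Sum>j\<in>insert None (range Some). (if None = j then 1 else (case j of Some k \<Rightarrow> y $ k | None \<Rightarrow> 0)) * x $ j)"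
    by (simp only: UNIV_option_conv[symmetric])
  also have "\<dots> = x $ None + (\<Sum>j\<in>range Some. (if None = j then 1 else (case j of Some k \<Rightarrow> y $ k | None \<Rightarrow> 0)) * x $ j)"
    by (subst sum.insert) auto
  also have "(\<Sum>j\<in>range Some. (if None = j then 1 else (case j of Some k \<Rightarrow> y $ k | None \<Rightarrow> 0)) * x $ j)
      = (\<Sum>k\<in>UNIV. y $ k * x $ (Some k))"
    by (subst sum.reindex) (auto simp: inj_on_def)
  finally show ?thesis .
qed

lemma u_coord_Some: "(u_mat y *v x) $ (Some k) = x $ (Some k)"
  for x :: "real^('n::finite option)"
proof -
  have "(u_mat y *v x) $ (Some k) = (\<Sum>j\<in>UNIV. (if Some k = j then 1 else 0) * x $ j)"
    unfolding matrix_vector_mult_def u_mat_def vec_lambda_beta by (intro sum.cong refl) simp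
  also have "\<dots> = x $ Some k" by (simp add: sum_delta_mult)
  finally show ?thesis .
qed

lemma M_coord_None:
  "((g_mat t ** u_mat y) *v x) $ None = exp t * (x $ None + (\<Sum>k\<in>UNIV. y $ k * x $ (Some k)))"
  for x :: "real^('n::finite option)"
  by (simp add: matrix_vector_mul_assoc[symmetric] g_coord u_coord_None)

lemma M_coord_Some:
  "((g_mat t ** u_mat y) *v x) $ (Some k) = exp (- t / real CARD('n)) * x $ (Some k)"
  for x :: "real^('n::finite option)"
  by (simp add: matrix_vector_mul_assoc[symmetric] g_coord u_coord_Some)

lemma M_inj:
  fixes x :: "real^('n::finite option)"
  assumes "(g_mat t ** u_mat y) *v x = 0"
  shows "x = 0"
proof -
  have s: "x $ Some k = 0" for k
    using M_coord_Some[of t y x k] assms by simp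
  have "x $ None = 0" using M_coord_None[of t y x] assms s by simp
  hence "x $ i = 0" for i using s by (cases i) auto
  thus ?thesis by (simp add: vec_eq_iff)
qed

lemma dioph:
  fixes y :: "real^'n::finite"
  assumes H: "\<And>\<epsilon>. \<epsilon> > 0 \<Longrightarrow> \<exists>q p. q \<noteq> 0 \<and> \<bar>y \<bullet> real_vec q + of_int p\<bar> < \<epsilon> \<and>
       \<bar>y \<bullet> real_vec q + of_int p\<bar> < norm (real_vec q) powr (- u)"
  shows "y \<in> W_set u"
proof -
  define Q where "Q = {q :: int^'n. \<exists>p::int. \<bar>y \<bullet> real_vec q + real_of_int p\<bar> < norm (real_vec q) powr (- u)}"
  have "infinite Q"
  proof (cases "\<exists>q p. q \<noteq> 0 \<and> y \<bullet> real_vec q + of_int p = 0")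
    case True
    then obtain q p where qp: "q \<noteq> 0" "y \<bullet> real_vec q + of_int p = 0" by blast
    define g where "g j = int (Suc j) *s q" for j
    obtain a where a: "q $ a \<noteq> 0" using qp(1) by (metis vec_eq_iff zero_index)
    have "inj g"
    proof (rule injI)
      fix i j assume "g i = g j"
      hence "int (Suc i) * q $ a = int (Suc j) * q $ a" by (metis g_def vector_smult_component)
      hence "int (Suc i) = int (Suc j)" using a mult_right_cancel by blast
      thus "i = j" by simp
    qed
    moreover have "range g \<subseteq> Q"
    proof clarify
      fix j
      have "(g j) $ a = int (Suc j) * q $ a" by (simp add: g_def algebra_simps)
      moreover have "int (Suc j) * q $ a \<noteq> 0" using a by simp
      ultimately have gz: "g j \<noteq> 0" by (metis zero_index)
      hence "real_vec (g j) \<noteq> 0" by (simp add: real_vec_eq0)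
      hence pos: "norm (real_vec (g j)) powr (- u) > 0" by simp
      have "y \<bullet> real_vec (g j) + of_int (int (Suc j) * p) = real (Suc j) * (y \<bullet> real_vec q + of_int p)"
        by (simp only: g_def real_vec_smult inner_scaleR_right) (simp add: algebra_simps)
      also have "\<dots> = 0" using qp(2) by simp
      finally show "g j \<in> Q" unfolding Q_def using pos by (intro CollectI exI[of _ "int (Suc j) * p"]) simp
    qed
    ultimately show ?thesis using infinite_iff_countable_subset by blast
  next
    case False
    hence nz: "\<And>q p. q \<noteq> 0 \<Longrightarrow> y \<bullet> real_vec q + of_int p \<noteq> 0" by blast
    show ?thesis
    proof
      assume finQ: "finite Q"
      define Fs where "Fs = {(q, p). q \<in> Q \<and> q \<noteq> 0 \<and> \<bar>y \<bullet> real_vec q + of_int p\<bar> < 1}"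
      have "Fs \<subseteq> Sigma Q (\<lambda>q. {-(\<lceil>\<bar>y \<bullet> real_vec q\<bar>\<rceil>+1)..\<lceil>\<bar>y \<bullet> real_vec q\<bar>\<rceil>+1})"
      proof
        fix x assume "x \<in> Fs"
        then obtain q p where x: "x = (q, p)" and "(q, p) \<in> Fs" by (cases x) auto
        hence qp: "q \<in> Q" "\<bar>y \<bullet> real_vec q + of_int p\<bar> < 1" by (auto simp: Fs_def)
        have "\<bar>real_of_int p\<bar> < \<bar>y \<bullet> real_vec q\<bar> + 1" using qp(2) by linarith
        also have "\<dots> \<le> of_int (\<lceil>\<bar>y \<bullet> real_vec q\<bar>\<rceil> + 1)" by simp
        finally have "\<bar>p\<bar> \<le> \<lceil>\<bar>y \<bullet> real_vec q\<bar>\<rceil> + 1" by linarith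
        thus "x \<in> Sigma Q (\<lambda>q. {-(\<lceil>\<bar>y \<bullet> real_vec q\<bar>\<rceil>+1)..\<lceil>\<bar>y \<bullet> real_vec q\<bar>\<rceil>+1})"
          using qp(1) x by (auto simp: abs_le_iff)
      qed
      hence finF: "finite Fs" by (rule finite_subset) (use finQ in auto)
      define V where "V = (\<lambda>(q, p). \<bar>y \<bullet> real_vec q + of_int p\<bar>) ` Fs"
      define \<delta> where "\<delta> = Min (insert 1 V)"
      have finV: "finite (insert 1 V)" using finF by (simp add: V_def)
      have Vpos: "0 < v" if vV: "v \<in> V" for v
      proof -
        obtain q p where "(q, p) \<in> Fs" "v = \<bar>y \<bullet> real_vec q + of_int p\<bar>" using vV by (auto simp: V_def)
        thus "0 < v" using nz by (auto simp: Fs_def)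
      qed
      have \<delta>0: "\<delta> > 0" unfolding \<delta>_def using Min_gr_iff[OF finV] Vpos by auto
      obtain q p where qp: "q \<noteq> 0" "\<bar>y \<bullet> real_vec q + of_int p\<bar> < \<delta>"
          "\<bar>y \<bullet> real_vec q + of_int p\<bar> < norm (real_vec q) powr (- u)"
        using H[OF \<delta>0] by blast
      have \<delta>1: "\<delta> \<le> 1" unfolding \<delta>_def using finV by (intro Min_le) auto
      have "q \<in> Q" using qp(3) unfolding Q_def by blast
      hence "(q, p) \<in> Fs" using qp(1,2) \<delta>1 by (auto simp: Fs_def)
      hence "\<bar>y \<bullet> real_vec q + of_int p\<bar> \<in> insert 1 V" by (force simp: V_def)
      hence "\<delta> \<le> \<bar>y \<bullet> real_vec q + of_int p\<bar>" unfolding \<delta>_def using finV by (intro Min_le)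
      thus False using qp(2) by simp
    qed
  qed
  thus ?thesis by (simp add: W_set_def Q_def)
qed


lemma exp_bound: "(K::real) > 0 \<Longrightarrow> \<kappa> > 0 \<Longrightarrow> t \<ge> ln K / \<kappa> \<Longrightarrow> K \<le> exp (\<kappa> * t)"
proof -
  assume K: "K > 0" and k: "\<kappa> > 0" and t: "t \<ge> ln K / \<kappa>"
  have "ln K \<le> \<kappa> * t" using t k by (simp add: divide_le_eq mult.commute)
  hence "exp (ln K) \<le> exp (\<kappa> * t)" by simp
  thus ?thesis using K by simp
qed

theorem lemma4p1:
  fixes \<mu> :: "'a::metric_space measure"
    and f :: "'a \<Rightarrow> real^'n::finite"
    and c v :: real
  assumes "sets \<mu> = sets borel"
    and "c > 0" and "v > 0"
    and "c = (v - real CARD('n)) / (real CARD('n) * (v + 1))"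
    and "\<not> (\<forall>d>c. \<exists>T>0. \<forall>t\<ge>T. \<forall>\<Gamma> :: (int^('n option)) set. primitive_subgroup \<Gamma> \<longrightarrow>
            (SUP x\<in>msupp \<mu>. ereal (covol (g_mat t ** u_mat (f x)) \<Gamma>))
              \<ge> ereal (exp (- real (rk \<Gamma>) * d * t)))"
  shows "\<exists>u>v. f ` msupp \<mu> \<subseteq> W_set u"
proof -
  define n where "n = real CARD('n)"
  have n1: "n \<ge> 1" by (simp add: n_def)
  have c0: "c > 0" and v0: "v > 0" using assms by auto
  have cdef: "c = (v - n) / (n * (v + 1))" using assms(4) by (simp add: n_def)
  obtain d where d: "d > c" and H: "\<not> (\<exists>T>0. \<forall>t\<ge>T. \<forall>\<Gamma> :: (int^('n option)) set. primitive_subgroup \<Gamma> \<longrightarrow>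
            (SUP x\<in>msupp \<mu>. ereal (covol (g_mat t ** u_mat (f x)) \<Gamma>))
              \<ge> ereal (exp (- real (rk \<Gamma>) * d * t)))"
    using assms(5) by blast
  have Hex: "\<exists>t\<ge>T. \<exists>\<Gamma> :: (int^('n option)) set. primitive_subgroup \<Gamma> \<and>
      (SUP x\<in>msupp \<mu>. ereal (covol (g_mat t ** u_mat (f x)) \<Gamma>)) < ereal (exp (- real (rk \<Gamma>) * d * t))"
    if T: "T > 0" for T
    using H T by (auto simp: not_le)
  have X: "n * (v + 1) \<noteq> 0" using n1 v0 by simp
  have cn: "c * (n * (v + 1)) = v - n" using nonzero_eq_divide_eq[OF X, of c "v - n"] cdef by simp
  have cl: "c < 1 / n"
  proof -
    have e1: "1 / n * (n * (v + 1)) = v + 1" using n1 by simp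
    have "c * (n * (v + 1)) < 1 / n * (n * (v + 1))" unfolding e1 cn using n1 by linarith
    hence "c * n < 1" using n1 v0 by (simp add: mult_less_cancel_right)
    thus ?thesis using n1 by (simp add: less_divide_eq)
  qed
  define d' where "d' = min d ((c + 1/n)/2)"
  have "c < (c + 1/n)/2" using cl by (simp add: less_divide_eq)
  hence d'c: "c < d'" unfolding d'_def using d by simp
  have "d' \<le> (c + 1/n)/2" unfolding d'_def by (rule min.cobounded2)
  moreover have "(c + 1/n)/2 < 1/n" using cl by (simp add: divide_less_eq)
  ultimately have d'n: "d' < 1/n" by linarith
  have d'd: "d' \<le> d" unfolding d'_def by (rule min.cobounded1)
  have d'0: "d' > 0" using d'c c0 by simp
  have nd: "1 - n * d' > 0" using d'n n1 by (simp add: field_simps)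
  define a where "a = 1/n - d'"
  have a0: "a > 0" using d'n by (simp add: a_def)
  define us where "us = n * (1 + d') / (1 - n * d')"
  have usv: "us > v"
  proof -
    have "v - n < d' * (n * (v + 1))"
      using d'c cn n1 v0 by (metis mult_strict_right_mono mult_pos_pos zero_less_one add_pos_pos order_less_le_trans less_le_trans linorder_not_le le_numeral_extra(1)) 
    hence "v * (1 - n * d') < n * (1 + d')" by (simp add: algebra_simps)
    thus ?thesis using nd by (simp add: us_def less_divide_eq)
  qed
  define u where "u = (v + us) / 2"
  have uv: "u > v" and uus: "u < us" using usv by (simp_all add: u_def)
  have u0: "u > 0" using uv v0 by simp
  have usa: "us * a = 1 + d'" using nd n1 by (simp add: us_def a_def field_simps)
  define \<kappa> where "\<kappa> = (1 + d') - u * a"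
  have \<kappa>0: "\<kappa> > 0"
  proof -
    have "u * a < us * a" using uus a0 by simp
    thus ?thesis using usa by (simp add: \<kappa>_def)
  qed
  define m where "m = CARD('n option)"
  define C where "C = 2 * real (2 * m) ^ (2 * m)"
  have C1: "C \<ge> 1"
  proof -
    have "m \<ge> 1" unfolding m_def by (simp add: Suc_le_eq)
    hence "real (2 * m) \<ge> 1" by simp
    hence "real (2 * m) ^ (2 * m) \<ge> 1" by (rule one_le_power)
    thus ?thesis by (simp add: C_def)
  qed
  have C0: "C > 0" using C1 by simp
  have key: "\<exists>q p. q \<noteq> 0 \<and> \<bar>f x \<bullet> real_vec q + of_int p\<bar> < \<epsilon> \<and>
       \<bar>f x \<bullet> real_vec q + of_int p\<bar> < norm (real_vec q) powr (- u)"
    if xs: "x \<in> msupp \<mu>" and \<epsilon>: "\<epsilon> > 0" for x \<epsilon>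
  proof -
    define y where "y = f x"
    define K2 where "K2 = C * (n * C) powr u"
    have K20: "K2 > 0" using C0 n1 by (simp add: K2_def)
    define T0 where "T0 = max 1 (max (ln C / (1 + d')) (max (ln (C / \<epsilon>) / (1 + d')) (ln K2 / \<kappa>)))"
    have T0: "T0 > 0" by (simp add: T0_def)
    obtain t \<Gamma> where t: "t \<ge> T0" and prim: "primitive_subgroup (\<Gamma> :: (int^('n option)) set)"
      and sup: "(SUP x\<in>msupp \<mu>. ereal (covol (g_mat t ** u_mat (f x)) \<Gamma>)) < ereal (exp (- real (rk \<Gamma>) * d * t))"
      using Hex[OF T0] by blast
    have t0: "t > 0" using t T0 by simp
    have tC: "ln C / (1 + d') \<le> t" "ln (C / \<epsilon>) / (1 + d') \<le> t" "ln K2 / \<kappa> \<le> t"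
      using t by (simp_all add: T0_def)
    define M where "M = g_mat t ** u_mat y"
    define k where "k = rk \<Gamma>"
    have "ereal (covol M \<Gamma>) \<le> (SUP x\<in>msupp \<mu>. ereal (covol (g_mat t ** u_mat (f x)) \<Gamma>))"
      unfolding M_def y_def using xs by (rule SUP_upper)
    hence "ereal (covol M \<Gamma>) < ereal (exp (- real k * d * t))" using sup unfolding k_def
      by (rule order.strict_trans1)
    hence cov: "covol M \<Gamma> < exp (- real k * d * t)" by simp
    obtain z where zG: "z \<in> \<Gamma>" and z0: "z \<noteq> 0"
      and zn: "norm (M *v real_vec z) < (C * exp (- real k * d * t)) powr (1 / real k)"
      using covol_short[OF prim _ cov] M_inj[of t y] by (auto simp: M_def C_def m_def k_def)
    have k1: "k \<ge> 1"
    proof (rule ccontr)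
      assume "\<not> k \<ge> 1"
      hence k0: "k = 0" by simp
      obtain bs where bs: "is_Zbasis \<Gamma> bs" using primitive_Zbasis[OF prim] by blast
      have "length bs = 0" using rk_Zbasis[OF bs] k0 by (simp add: k_def)
      hence "\<Gamma> = {0}" using Zbasis_D(3)[OF bs] by simp
      thus False using prim by (simp add: primitive_subgroup_def)
    qed
    have "(C * exp (- real k * d * t)) powr (1 / real k) = C powr (1 / real k) * exp (- d * t)"
      using k1 C0 by (simp add: powr_mult exp_powr_real)
    also have "\<dots> \<le> C * exp (- d' * t)"
    proof (rule mult_mono)
      have "C powr (1 / real k) \<le> C powr 1" using k1 C1 by (intro powr_mono) auto
      thus "C powr (1 / real k) \<le> C" using C0 by simp
      show "exp (- d * t) \<le> exp (- d' * t)" using d'd t0 by (simp add: mult_right_mono)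
    qed (use C0 in auto)
    finally have nM: "norm (M *v real_vec z) < C * exp (- d' * t)" using zn by simp
    define p where "p = z $ None"
    define q :: "int^'n" where "q = (\<chi> k. z $ Some k)"
    have rvq: "real_vec q $ k = real_of_int (z $ Some k)" for k by (simp add: real_vec_def q_def)
    have Mnone: "(M *v real_vec z) $ None = exp t * (y \<bullet> real_vec q + of_int p)"
      unfolding M_def M_coord_None by (simp add: p_def q_def inner_vec_def real_vec_def mult.commute)
    have Msome: "(M *v real_vec z) $ Some k = exp (- t / n) * real_vec q $ k" for k
      unfolding M_def M_coord_Some by (simp add: n_def q_def real_vec_def)
    have A1: "\<bar>y \<bullet> real_vec q + of_int p\<bar> < C * exp (- (1 + d') * t)"
    proof -
      have "exp t * \<bar>y \<bullet> real_vec q + of_int p\<bar> \<le> norm (M *v real_vec z)"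
        using component_le_norm_cart[of "M *v real_vec z" None] Mnone by (simp add: abs_mult)
      hence "exp t * \<bar>y \<bullet> real_vec q + of_int p\<bar> < C * exp (- d' * t)" using nM by simp
      hence "\<bar>y \<bullet> real_vec q + of_int p\<bar> < C * exp (- d' * t) / exp t"
        by (simp add: less_divide_eq mult.commute)
      also have "C * exp (- d' * t) / exp t = C * exp (- (1 + d') * t)"
      proof -
        have "exp (- (1 + d') * t) = exp (- d' * t - t)" by (simp add: algebra_simps)
        also have "\<dots> = exp (- d' * t) / exp t" by (rule exp_diff)
        finally show ?thesis by simp
      qed
      finally show ?thesis .
    qed
    have A2: "\<bar>real_vec q $ k\<bar> < C * exp (a * t)" for k
    proof -
      have "exp (- t / n) * \<bar>real_vec q $ k\<bar> \<le> norm (M *v real_vec z)"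
        using component_le_norm_cart[of "M *v real_vec z" "Some k"] Msome[of k] by (simp add: abs_mult)
      hence "exp (- t / n) * \<bar>real_vec q $ k\<bar> < C * exp (- d' * t)" using nM by simp
      hence "\<bar>real_vec q $ k\<bar> < C * exp (- d' * t) / exp (- t / n)"
        by (simp add: less_divide_eq mult.commute)
      also have "C * exp (- d' * t) / exp (- t / n) = C * exp (a * t)"
      proof -
        have "exp (a * t) = exp (- d' * t - (- t / n))" by (simp add: a_def algebra_simps)
        also have "\<dots> = exp (- d' * t) / exp (- t / n)" by (rule exp_diff)
        finally show ?thesis by simp
      qed
      finally show ?thesis .
    qed
    define N where "N = n * C * exp (a * t)"
    have nq: "norm (real_vec q) < N"
    proof -
      have "norm (real_vec q) \<le> (\<Sum>k\<in>UNIV. \<bar>real_vec q $ k\<bar>)" by (rule norm_le_l1_cart)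
      also have "\<dots> < (\<Sum>k\<in>(UNIV::'n set). C * exp (a * t))" using A2 by (intro sum_strict_mono) auto
      also have "\<dots> = N" by (simp add: N_def n_def)
      finally show ?thesis .
    qed
    have e1: "exp ((1 + d') * t) * exp (- (1 + d') * t) = 1"
      by (metis exp_add exp_zero add.right_inverse mult_minus_left)
    have small: "C * exp (- (1 + d') * t) \<le> 1"
    proof -
      have "C \<le> exp ((1 + d') * t)" using exp_bound[OF C0 _ tC(1)] d'0 by simp
      hence "C * exp (- (1 + d') * t) \<le> exp ((1 + d') * t) * exp (- (1 + d') * t)" by simp
      thus ?thesis by (simp only: e1)
    qed
    have small\<epsilon>: "C * exp (- (1 + d') * t) \<le> \<epsilon>"
    proof -
      have "C / \<epsilon> \<le> exp ((1 + d') * t)" using exp_bound[OF _ _ tC(2)] d'0 C0 \<epsilon> by simp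
      hence "C \<le> \<epsilon> * exp ((1 + d') * t)" using \<epsilon> by (simp add: divide_le_eq mult.commute)
      hence "C * exp (- (1 + d') * t) \<le> \<epsilon> * exp ((1 + d') * t) * exp (- (1 + d') * t)" by simp
      thus ?thesis by (simp only: mult.assoc e1 mult_1_right)
    qed
    have q0: "q \<noteq> 0"
    proof
      assume "q = 0"
      hence "real_vec q = 0" by (simp add: real_vec_eq0)
      hence "\<bar>real_of_int p\<bar> < 1" using A1 small by simp
      hence "p = 0" by simp
      hence "z $ i = 0" for i using \<open>q = 0\<close>
        by (cases i) (auto simp: p_def q_def vec_eq_iff)
      thus False using z0 by (simp add: vec_eq_iff)
    qed
    have nq0: "norm (real_vec q) > 0" using q0 by (simp add: real_vec_eq0)
    have W1: "C * exp (- (1 + d') * t) \<le> N powr (- u)"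
    proof -
      have "N powr (- u) = (n * C) powr (- u) * exp (a * t) powr (- u)"
        using n1 C0 by (simp add: N_def powr_mult)
      also have "\<dots> = (n * C) powr (- u) * exp (- u * a * t)"
        by (simp add: exp_powr_real algebra_simps)
      finally have Ne: "N powr (- u) = (n * C) powr (- u) * exp (- u * a * t)" .
      have "K2 \<le> exp (\<kappa> * t)" using exp_bound[OF K20 \<kappa>0 tC(3)] .
      hence "C * (n * C) powr u \<le> exp (((1 + d') - u * a) * t)" by (simp add: K2_def \<kappa>_def)
      hence le: "C * (n * C) powr u * ((n * C) powr (- u) * exp (- (1 + d') * t))
          \<le> exp (((1 + d') - u * a) * t) * ((n * C) powr (- u) * exp (- (1 + d') * t))"
        by (intro mult_right_mono) auto
      have eq1: "C * (n * C) powr u * ((n * C) powr (- u) * exp (- (1 + d') * t)) = C * exp (- (1 + d') * t)"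
        using n1 C0 by (simp add: powr_minus field_simps)
      have eq2: "exp (((1 + d') - u * a) * t) * ((n * C) powr (- u) * exp (- (1 + d') * t))
          = (n * C) powr (- u) * exp (- u * a * t)"
        by (simp add: mult.assoc mult.left_commute exp_add[symmetric] algebra_simps)
      have "C * exp (- (1 + d') * t) = C * (n * C) powr u * ((n * C) powr (- u) * exp (- (1 + d') * t))"
        using eq1 by simp
      also have "\<dots> \<le> exp (((1 + d') - u * a) * t) * ((n * C) powr (- u) * exp (- (1 + d') * t))" by (rule le)
      also have "\<dots> = N powr (- u)" using eq2 Ne by simp
      finally show ?thesis .
    qed
    have W2: "N powr (- u) \<le> norm (real_vec q) powr (- u)"
      using nq nq0 u0 by (intro powr_mono2') auto
    show ?thesis
      using q0 A1 small\<epsilon> W1 W2 unfolding y_def[symmetric]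
      by (intro exI[of _ q] exI[of _ p]) auto
  qed
  show ?thesis
  proof (intro exI[of _ u] conjI)
    show "u > v" by (rule uv)
    show "f ` msupp \<mu> \<subseteq> W_set u"
    proof
      fix y assume "y \<in> f ` msupp \<mu>"
      then obtain x where x: "x \<in> msupp \<mu>" "y = f x" by blast
      show "y \<in> W_set u" unfolding x(2) by (rule dioph) (rule key[OF x(1)])
    qed
  qed
qed

end
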